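(* Let $k\ge0$, let $X_n$ be a homogeneous and spatially independent random subcomplex of $\triangle_n$, let $T\subset\triangle_n$ be a finite $(k+1)$-tree with $\mathbb{P}(T\subset X_n)>0$, and let $\sigma_1,\dots,\sigma_i$ be $(k+1)$-simplices of $\triangle_n$ not in $T$. Then \[ \mathbb{P}(\sigma_j\notin X_n\text{ for all }j=1,\dots,i\mid T\subset X_n)\ge1-i\,s_k . \]
   Context: Random subcomplexes of $\triangle_n=2^{[n]}$ (random families of subsets of $[n]$ closed under subsets); homogeneous: law invariant under permutations of $[n]$; spatially independent: $\mathbb{P}(Y_1\cup Y_2\subset X)\mathbb{P}(Y_1\cap Y_2\subset X)=\mathbb{P}(Y_1\subset X)\mathbb{P}(Y_2\subset X)$ for all subcomplexes $Y_1,Y_2$. A $k$-simplex is a $(k+1)$-element set; $K(\tau)$ denotes the set of all subsets of $\tau$. A finite simplicial complex $T$ is a $(k+1)$-tree if for some $k$-simplex $\tau\in T$ it is obtained from $K(\tau)$ by finitely many steps, each adding $K(\tau'\cup\{v\})$ where $\tau'$ is a $k$-simplex already present and $v$ is a vertex not yet present. $s_k=\mathbb{P}(\tau_1\cup\tau_2\in X_n\mid\tau_1,\tau_2\in X_n)$ if $\mathbb{P}(\tau_1,\tau_2\in X_n)>0$ and $s_k=0$ otherwise, where $\tau_1,\tau_2$ are any $k$-simplices of $\triangle_n$ with $\#(\tau_1\cap\tau_2)=k$ (well defined by homogeneity). *)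

theory Defs
  imports "HOL-Probability.Probability"
begin

text \<open>Vertex set [n] = {1..n}; the full ksimplex \<triangle>_n is Pow {1..n}.\<close>

definition subcomplex :: "nat \<Rightarrow> nat set set \<Rightarrow> bool" where
  "subcomplex n K \<longleftrightarrow> K \<subseteq> Pow {1..n} \<and> (\<forall>A\<in>K. \<forall>B. B \<subseteq> A \<longrightarrow> B \<in> K)"

definition random_subcomplex :: "nat \<Rightarrow> nat set set pmf \<Rightarrow> bool" where
  "random_subcomplex n X \<longleftrightarrow> (\<forall>K\<in>set_pmf X. subcomplex n K)"

definition homogeneous :: "nat \<Rightarrow> nat set set pmf \<Rightarrow> bool" where
  "homogeneous n X \<longleftrightarrow>
     (\<forall>\<pi>. bij_betw \<pi> {1..n} {1..n} \<longrightarrow> map_pmf (\<lambda>K. (\<lambda>A. \<pi> ` A) ` K) X = X)"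

definition spatially_independent :: "nat \<Rightarrow> nat set set pmf \<Rightarrow> bool" where
  "spatially_independent n X \<longleftrightarrow>
     (\<forall>Y1 Y2. subcomplex n Y1 \<longrightarrow> subcomplex n Y2 \<longrightarrow>
        measure_pmf.prob X {K. Y1 \<union> Y2 \<subseteq> K} * measure_pmf.prob X {K. Y1 \<inter> Y2 \<subseteq> K}
        = measure_pmf.prob X {K. Y1 \<subseteq> K} * measure_pmf.prob X {K. Y2 \<subseteq> K})"

definition ksimplex :: "nat \<Rightarrow> nat set \<Rightarrow> bool" where
  "ksimplex k \<tau> \<longleftrightarrow> finite \<tau> \<and> card \<tau> = k + 1"

inductive tree :: "nat \<Rightarrow> nat set set \<Rightarrow> bool" for k where
  base: "ksimplex k \<tau> \<Longrightarrow> tree k (Pow \<tau>)"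
| step: "tree k T \<Longrightarrow> \<tau>' \<in> T \<Longrightarrow> ksimplex k \<tau>' \<Longrightarrow> v \<notin> \<Union>T \<Longrightarrow>
           tree k (T \<union> Pow (insert v \<tau>'))"

definition cond_prob :: "'a pmf \<Rightarrow> 'a set \<Rightarrow> 'a set \<Rightarrow> real" where
  "cond_prob X A B = measure_pmf.prob X (A \<inter> B) / measure_pmf.prob X B"

definition s_pair :: "nat set set pmf \<Rightarrow> nat set \<Rightarrow> nat set \<Rightarrow> real" where
  "s_pair X \<tau>1 \<tau>2 =
     (if measure_pmf.prob X {K. \<tau>1 \<in> K \<and> \<tau>2 \<in> K} > 0
      then cond_prob X {K. \<tau>1 \<union> \<tau>2 \<in> K} {K. \<tau>1 \<in> K \<and> \<tau>2 \<in> K}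
      else 0)"

definition adjacent_pair :: "nat \<Rightarrow> nat \<Rightarrow> nat set \<Rightarrow> nat set \<Rightarrow> bool" where
  "adjacent_pair n k \<tau>1 \<tau>2 \<longleftrightarrow> \<tau>1 \<subseteq> {1..n} \<and> \<tau>2 \<subseteq> {1..n} \<and>
     ksimplex k \<tau>1 \<and> ksimplex k \<tau>2 \<and> card (\<tau>1 \<inter> \<tau>2) = k"

text \<open>s_k: value at any adjacent pair (well defined by homogeneity); if no such pair
  exists in \<triangle>_n (n < k+2) we set it to 0.\<close>
definition s :: "nat \<Rightarrow> nat \<Rightarrow> nat set set pmf \<Rightarrow> real" where
  "s n k X = (if \<exists>\<tau>1 \<tau>2. adjacent_pair n k \<tau>1 \<tau>2
              then (let (\<tau>1, \<tau>2) = (SOME p. adjacent_pair n k (fst p) (snd p)) in s_pair X \<tau>1 \<tau>2)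
              else 0)"

end

theory Submission
  imports Defs
begin

lemma prob_cong_supp:
  assumes "\<And>K. K \<in> set_pmf X \<Longrightarrow> K \<in> A \<longleftrightarrow> K \<in> B"
  shows "measure_pmf.prob X A = measure_pmf.prob X B"
proof -
  have "A \<inter> set_pmf X = B \<inter> set_pmf X" using assms by blast
  then show ?thesis by (metis measure_Int_set_pmf)
qed

lemma tree_down: "tree k T \<Longrightarrow> A \<in> T \<Longrightarrow> B \<subseteq> A \<Longrightarrow> B \<in> T"
  by (induction T arbitrary: A rule: tree.induct) auto

lemma tree_clique: "tree k T \<Longrightarrow> (\<forall>a\<in>S. \<forall>b\<in>S. {a,b} \<in> T) \<Longrightarrow> S \<in> T"
proof (induction T arbitrary: S rule: tree.induct)
  case (base \<tau>)
  have "S \<subseteq> \<tau>"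
  proof
    fix a assume "a \<in> S"
    then have "{a,a} \<in> Pow \<tau>" using base.prems by blast
    then show "a \<in> \<tau>" by simp
  qed
  then show ?case by simp
next
  case (step T \<tau>' v)
  show ?case
  proof (cases "v \<in> S")
    case True
    have "S \<subseteq> insert v \<tau>'"
    proof
      fix a assume a: "a \<in> S"
      have "{a,v} \<in> T \<union> Pow (insert v \<tau>')" using step.prems a True by blast
      moreover have "{a,v} \<notin> T" using step.hyps(4) by blast
      ultimately show "a \<in> insert v \<tau>'" by blast
    qed
    then show ?thesis by blast
  next
    case False
    have "\<forall>a\<in>S. \<forall>b\<in>S. {a,b} \<in> T"
    proof (intro ballI)
      fix a b assume ab: "a \<in> S" "b \<in> S"
      have "{a,b} \<in> T \<union> Pow (insert v \<tau>')" using step.prems ab by blast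
      moreover have "{a,b} \<subseteq> insert v \<tau>' \<Longrightarrow> {a,b} \<subseteq> \<tau>'" using False ab by blast
      ultimately show "{a,b} \<in> T" using tree_down[OF step.hyps(1,2)] by blast
    qed
    then show ?thesis using step.IH by blast
  qed
qed

lemma tree_edge:
  assumes "tree k T" "\<sigma> \<notin> T" "finite \<sigma>" "card \<sigma> \<ge> 2"
  shows "\<exists>a\<in>\<sigma>. \<exists>b\<in>\<sigma>. a \<noteq> b \<and> {a,b} \<notin> T"
proof -
  have "\<not> (\<forall>a\<in>\<sigma>. \<forall>b\<in>\<sigma>. {a,b} \<in> T)"
  proof
    assume "\<forall>a\<in>\<sigma>. \<forall>b\<in>\<sigma>. {a,b} \<in> T"
    from tree_clique[OF assms(1) this] assms(2) show False by simp
  qed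
  then obtain a b where ab: "a \<in> \<sigma>" "b \<in> \<sigma>" "{a,b} \<notin> T"
    by blast
  show ?thesis
  proof (cases "a = b")
    case False
    show ?thesis
    proof (rule bexI[of _ a])
      show "\<exists>b\<in>\<sigma>. a \<noteq> b \<and> {a,b} \<notin> T"
        using ab False by (intro bexI[of _ b]) simp_all
    qed (rule ab(1))
  next
    case True
    have "\<sigma> - {a} \<noteq> {}"
    proof
      assume "\<sigma> - {a} = {}"
      then have "\<sigma> \<subseteq> {a}" by blast
      then have "card \<sigma> \<le> card {a}" by (intro card_mono) auto
      then have "card \<sigma> \<le> 1" by simp
      then show False using assms(4) by simp
    qed
    then obtain c where c: "c \<in> \<sigma>" "c \<noteq> a" by blast
    have "{a,c} \<notin> T"
    proof
      assume "{a,c} \<in> T"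
      then have "{a} \<in> T" using tree_down[OF assms(1), of "{a,c}" "{a}"] by blast
      then show False using ab(3) True by simp
    qed
    show ?thesis
    proof (rule bexI[of _ a])
      show "\<exists>b\<in>\<sigma>. a \<noteq> b \<and> {a,b} \<notin> T"
        using c \<open>{a,c} \<notin> T\<close> by (intro bexI[of _ c]) simp_all
    qed (rule ab(1))
  qed
qed

lemma bij_piece:
  assumes "bij_betw f A A'" "bij_betw g B B'" "A \<inter> B = {}" "A' \<inter> B' = {}"
  shows "\<exists>h. bij_betw h (A \<union> B) (A' \<union> B') \<and> (\<forall>x\<in>A. h x = f x) \<and> (\<forall>x\<in>B. h x = g x)"
proof -
  let ?h = "\<lambda>x. if x \<in> A then f x else g x"
  have 1: "bij_betw ?h A A'"
    using assms(1) bij_betw_cong[of A ?h f A'] by simp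
  have 2: "bij_betw ?h B B'"
  proof -
    have "\<And>a. a \<in> B \<Longrightarrow> ?h a = g a" using assms(3) by auto
    then show ?thesis using assms(2) bij_betw_cong[of B ?h g B'] by simp
  qed
  have "bij_betw ?h (A \<union> B) (A' \<union> B')"
    using bij_betw_combine[OF 1 2 assms(4)] .
  moreover have "\<forall>x\<in>A. ?h x = f x" by simp
  moreover have "\<forall>x\<in>B. ?h x = g x" using assms(3) by auto
  ultimately show ?thesis by blast
qed

lemma adj_facts:
  assumes "adjacent_pair n k t1 t2"
  shows "finite t1" "finite t2" "card (t1 \<inter> t2) = k" "card (t1 - t2) = 1" "card (t2 - t1) = 1"
    "card ({1..n} - (t1 \<union> t2)) = n - (k + 2)" "t1 \<union> t2 \<subseteq> {1..n}"
proof -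
  have f: "finite t1" "finite t2" "card t1 = k + 1" "card t2 = k + 1" "card (t1 \<inter> t2) = k"
    "t1 \<subseteq> {1..n}" "t2 \<subseteq> {1..n}"
    using assms unfolding adjacent_pair_def ksimplex_def by auto
  show "finite t1" "finite t2" "card (t1 \<inter> t2) = k" "t1 \<union> t2 \<subseteq> {1..n}" using f by auto
  show "card (t1 - t2) = 1" using f card_Diff_subset_Int[of t1 t2] by simp
  show "card (t2 - t1) = 1" using f card_Diff_subset_Int[of t2 t1] by (simp add: Int_commute)
  have u: "card (t1 \<union> t2) = k + 2" using f card_Un_Int[of t1 t2] by simp
  show "card ({1..n} - (t1 \<union> t2)) = n - (k + 2)"
    using f u card_Diff_subset[of "t1 \<union> t2" "{1..n}"] by simp
qed

lemma adj_perm: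
  assumes A: "adjacent_pair n k t1 t2" and B: "adjacent_pair n k r1 r2"
  shows "\<exists>\<pi>. bij_betw \<pi> {1..n} {1..n} \<and> \<pi> ` t1 = r1 \<and> \<pi> ` t2 = r2"
proof -
  note a = adj_facts[OF A] and b = adj_facts[OF B]
  obtain f1 where f1: "bij_betw f1 (t1 \<inter> t2) (r1 \<inter> r2)"
    using finite_same_card_bij[of "t1 \<inter> t2" "r1 \<inter> r2"] a b by auto
  obtain f2 where f2: "bij_betw f2 (t1 - t2) (r1 - r2)"
    using finite_same_card_bij[of "t1 - t2" "r1 - r2"] a b by auto
  obtain f3 where f3: "bij_betw f3 (t2 - t1) (r2 - r1)"
    using finite_same_card_bij[of "t2 - t1" "r2 - r1"] a b by auto
  obtain f4 where f4: "bij_betw f4 ({1..n} - (t1 \<union> t2)) ({1..n} - (r1 \<union> r2))"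
    using finite_same_card_bij[of "{1..n} - (t1 \<union> t2)" "{1..n} - (r1 \<union> r2)"] a b by auto
  obtain h12 where h12: "bij_betw h12 ((t1 \<inter> t2) \<union> (t1 - t2)) ((r1 \<inter> r2) \<union> (r1 - r2))"
      "\<forall>x\<in>t1 \<inter> t2. h12 x = f1 x" "\<forall>x\<in>t1 - t2. h12 x = f2 x"
    using bij_piece[OF f1 f2] by blast
  obtain h123 where h123: "bij_betw h123 (((t1 \<inter> t2) \<union> (t1 - t2)) \<union> (t2 - t1))
        (((r1 \<inter> r2) \<union> (r1 - r2)) \<union> (r2 - r1))"
      "\<forall>x\<in>(t1 \<inter> t2) \<union> (t1 - t2). h123 x = h12 x" "\<forall>x\<in>t2 - t1. h123 x = f3 x"
    using bij_piece[OF h12(1) f3] by blast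
  obtain p where p: "bij_betw p ((((t1 \<inter> t2) \<union> (t1 - t2)) \<union> (t2 - t1)) \<union> ({1..n} - (t1 \<union> t2)))
        ((((r1 \<inter> r2) \<union> (r1 - r2)) \<union> (r2 - r1)) \<union> ({1..n} - (r1 \<union> r2)))"
      "\<forall>x\<in>((t1 \<inter> t2) \<union> (t1 - t2)) \<union> (t2 - t1). p x = h123 x"
    using bij_piece[OF h123(1) f4] by blast
  have e1: "(((t1 \<inter> t2) \<union> (t1 - t2)) \<union> (t2 - t1)) \<union> ({1..n} - (t1 \<union> t2)) = {1..n}"
    using a(7) by blast
  have e2: "(((r1 \<inter> r2) \<union> (r1 - r2)) \<union> (r2 - r1)) \<union> ({1..n} - (r1 \<union> r2)) = {1..n}"
    using b(7) by blast
  have pb: "bij_betw p {1..n} {1..n}" using p(1) unfolding e1 e2 .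
  have p1: "\<forall>x\<in>t1 \<inter> t2. p x = f1 x" using p(2) h123(2) h12(2) by auto
  have p2: "\<forall>x\<in>t1 - t2. p x = f2 x" using p(2) h123(2) h12(3) by auto
  have p3: "\<forall>x\<in>t2 - t1. p x = f3 x" using p(2) h123(3) by auto
  have i1: "p ` (t1 \<inter> t2) = r1 \<inter> r2"
    using image_cong[OF refl, of "t1 \<inter> t2" p f1] p1 f1 by (simp add: bij_betw_def)
  have i2: "p ` (t1 - t2) = r1 - r2"
    using image_cong[OF refl, of "t1 - t2" p f2] p2 f2 by (simp add: bij_betw_def)
  have i3: "p ` (t2 - t1) = r2 - r1"
    using image_cong[OF refl, of "t2 - t1" p f3] p3 f3 by (simp add: bij_betw_def)
  have "t1 = (t1 \<inter> t2) \<union> (t1 - t2)" by blast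
  then have q1: "p ` t1 = r1" using i1 i2 by (metis image_Un Int_Diff_Un)
  have "t2 = (t1 \<inter> t2) \<union> (t2 - t1)" by blast
  then have q2: "p ` t2 = r2" using i1 i3
    by (metis image_Un Int_Diff_Un Int_commute)
  show ?thesis using pb q1 q2 by blast
qed

lemma hom_prob:
  assumes hom: "homogeneous n X" and rs: "random_subcomplex n X"
    and pb: "bij_betw \<pi> {1..n} {1..n}" and R: "R \<subseteq> Pow {1..n}"
  shows "measure_pmf.prob X {K. \<forall>\<rho>\<in>R. \<pi> ` \<rho> \<in> K} = measure_pmf.prob X {K. \<forall>\<rho>\<in>R. \<rho> \<in> K}"
proof -
  let ?f = "\<lambda>K. (\<lambda>A. \<pi> ` A) ` K"
  have m: "map_pmf ?f X = X" using hom pb unfolding homogeneous_def by blast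
  have "measure_pmf.prob X {K. \<forall>\<rho>\<in>R. \<pi> ` \<rho> \<in> K}
      = measure_pmf.prob (map_pmf ?f X) {K. \<forall>\<rho>\<in>R. \<pi> ` \<rho> \<in> K}" using m by simp
  also have "\<dots> = measure_pmf.prob X (?f -` {K. \<forall>\<rho>\<in>R. \<pi> ` \<rho> \<in> K})"
    by (rule measure_map_pmf)
  also have "\<dots> = measure_pmf.prob X {K. \<forall>\<rho>\<in>R. \<rho> \<in> K}"
  proof (rule prob_cong_supp)
    fix K assume "K \<in> set_pmf X"
    then have KP: "K \<subseteq> Pow {1..n}" using rs unfolding random_subcomplex_def subcomplex_def by blast
    have inj: "inj_on \<pi> {1..n}" using pb by (simp add: bij_betw_def)
    have "\<And>\<rho>. \<rho> \<in> R \<Longrightarrow> \<pi> ` \<rho> \<in> ?f K \<longleftrightarrow> \<rho> \<in> K"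
    proof
      fix \<rho> assume r: "\<rho> \<in> R" and "\<pi> ` \<rho> \<in> ?f K"
      then obtain A where A: "A \<in> K" "\<pi> ` \<rho> = \<pi> ` A" by blast
      have "\<rho> = A" using inj_on_image_eq_iff[OF inj, of \<rho> A] A KP R r by blast
      then show "\<rho> \<in> K" using A by simp
    next
      fix \<rho> assume "\<rho> \<in> K" then show "\<pi> ` \<rho> \<in> ?f K" by blast
    qed
    then show "K \<in> ?f -` {K. \<forall>\<rho>\<in>R. \<pi> ` \<rho> \<in> K} \<longleftrightarrow> K \<in> {K. \<forall>\<rho>\<in>R. \<rho> \<in> K}"
      by simp
  qed
  finally show ?thesis .
qed

lemma s_pair_perm:
  assumes hom: "homogeneous n X" and rs: "random_subcomplex n X"
    and pb: "bij_betw \<pi> {1..n} {1..n}" and t: "t1 \<subseteq> {1..n}" "t2 \<subseteq> {1..n}"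
  shows "s_pair X (\<pi> ` t1) (\<pi> ` t2) = s_pair X t1 t2"
proof -
  have e1: "{K. \<pi> ` t1 \<in> K \<and> \<pi> ` t2 \<in> K} = {K. \<forall>\<rho>\<in>{t1,t2}. \<pi> ` \<rho> \<in> K}" by auto
  have e2: "{K. t1 \<in> K \<and> t2 \<in> K} = {K. \<forall>\<rho>\<in>{t1,t2}. \<rho> \<in> K}" by auto
  have e3: "{K. \<pi> ` t1 \<union> \<pi> ` t2 \<in> K} \<inter> {K. \<pi> ` t1 \<in> K \<and> \<pi> ` t2 \<in> K}
      = {K. \<forall>\<rho>\<in>{t1 \<union> t2,t1,t2}. \<pi> ` \<rho> \<in> K}" by (auto simp: image_Un)
  have e4: "{K. t1 \<union> t2 \<in> K} \<inter> {K. t1 \<in> K \<and> t2 \<in> K}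
      = {K. \<forall>\<rho>\<in>{t1 \<union> t2,t1,t2}. \<rho> \<in> K}" by auto
  have P1: "measure_pmf.prob X {K. \<pi> ` t1 \<in> K \<and> \<pi> ` t2 \<in> K} = measure_pmf.prob X {K. t1 \<in> K \<and> t2 \<in> K}"
    unfolding e1 e2 by (rule hom_prob[OF hom rs pb]) (use t in auto)
  have P2: "measure_pmf.prob X ({K. \<pi> ` t1 \<union> \<pi> ` t2 \<in> K} \<inter> {K. \<pi> ` t1 \<in> K \<and> \<pi> ` t2 \<in> K})
     = measure_pmf.prob X ({K. t1 \<union> t2 \<in> K} \<inter> {K. t1 \<in> K \<and> t2 \<in> K})"
    unfolding e3 e4 by (rule hom_prob[OF hom rs pb]) (use t in auto)
  show ?thesis unfolding s_pair_def cond_prob_def P1 P2 by simp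
qed

lemma s_eq:
  assumes hom: "homogeneous n X" and rs: "random_subcomplex n X"
    and adj: "adjacent_pair n k t1 t2"
  shows "s n k X = s_pair X t1 t2"
proof -
  have ex: "\<exists>t1 t2. adjacent_pair n k t1 t2" using adj by blast
  define p where "p = (SOME p. adjacent_pair n k (fst p) (snd p))"
  have pa: "adjacent_pair n k (fst p) (snd p)"
    unfolding p_def by (rule someI[of _ "(t1, t2)"]) (simp add: adj)
  have sv: "s n k X = s_pair X (fst p) (snd p)"
    unfolding s_def using ex p_def by (simp add: case_prod_beta)
  obtain \<pi> where pi: "bij_betw \<pi> {1..n} {1..n}" "\<pi> ` fst p = t1" "\<pi> ` snd p = t2"
    using adj_perm[OF pa adj] by blast
  have "fst p \<subseteq> {1..n}" "snd p \<subseteq> {1..n}" using pa unfolding adjacent_pair_def by auto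
  then have "s_pair X (\<pi> ` fst p) (\<pi> ` snd p) = s_pair X (fst p) (snd p)"
    using s_pair_perm[OF hom rs pi(1)] by blast
  then show ?thesis using sv pi by simp
qed

lemma sigma_bound:
  assumes rs: "random_subcomplex n X" and hom: "homogeneous n X"
    and si: "spatially_independent n X" and tr: "tree k T" and TP: "T \<subseteq> Pow {1..n}"
    and sn: "\<sigma> \<subseteq> {1..n}" and ks: "ksimplex (k + 1) \<sigma>" and nT: "\<sigma> \<notin> T"
  shows "measure_pmf.prob X {K. T \<subseteq> K \<and> \<sigma> \<in> K} \<le> s n k X * measure_pmf.prob X {K. T \<subseteq> K}"
proof -
  have fs: "finite \<sigma>" and cs: "card \<sigma> = k + 2" using ks unfolding ksimplex_def by auto
  obtain a b where ab: "a \<in> \<sigma>" "b \<in> \<sigma>" "a \<noteq> b" "{a,b} \<notin> T"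
    using tree_edge[OF tr nT fs] cs by auto
  define t1 where "t1 = \<sigma> - {a}"
  define t2 where "t2 = \<sigma> - {b}"
  have c1: "card t1 = k + 1" unfolding t1_def using fs cs ab by (simp add: card_Diff_singleton)
  have c2: "card t2 = k + 1" unfolding t2_def using fs cs ab by (simp add: card_Diff_singleton)
  have i12: "t1 \<inter> t2 = \<sigma> - {a,b}" unfolding t1_def t2_def by blast
  have cab: "card {a,b} = 2" using ab by simp
  have "{a,b} \<subseteq> \<sigma>" using ab by simp
  then have c12: "card (t1 \<inter> t2) = k" unfolding i12 using card_Diff_subset[of "{a,b}" \<sigma>] fs cs cab
    by (simp add: finite_subset)
  have adj: "adjacent_pair n k t1 t2" unfolding adjacent_pair_def ksimplex_def
    using c1 c2 c12 fs sn unfolding t1_def t2_def by auto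
  have un: "t1 \<union> t2 = \<sigma>" unfolding t1_def t2_def using ab by blast
  have dc: "\<And>K A B. K \<in> set_pmf X \<Longrightarrow> A \<in> K \<Longrightarrow> B \<subseteq> A \<Longrightarrow> B \<in> K"
    using rs unfolding random_subcomplex_def subcomplex_def by blast
  have powsub: "\<And>K A. K \<in> set_pmf X \<Longrightarrow> Pow A \<subseteq> K \<longleftrightarrow> A \<in> K"
    using dc by blast
  have sc1: "subcomplex n (Pow \<sigma>)" unfolding subcomplex_def using sn by auto
  have sc2: "subcomplex n (T \<union> Pow t1 \<union> Pow t2)" unfolding subcomplex_def
    using TP sn tree_down[OF tr] unfolding t1_def t2_def by blast
  have inter: "Pow \<sigma> \<inter> (T \<union> Pow t1 \<union> Pow t2) = Pow t1 \<union> Pow t2"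
  proof
    show "Pow \<sigma> \<inter> (T \<union> Pow t1 \<union> Pow t2) \<subseteq> Pow t1 \<union> Pow t2"
    proof
      fix \<rho> assume r: "\<rho> \<in> Pow \<sigma> \<inter> (T \<union> Pow t1 \<union> Pow t2)"
      show "\<rho> \<in> Pow t1 \<union> Pow t2"
      proof (cases "\<rho> \<in> T")
        case True
        have "\<not> (a \<in> \<rho> \<and> b \<in> \<rho>)"
        proof
          assume "a \<in> \<rho> \<and> b \<in> \<rho>"
          then have "{a,b} \<subseteq> \<rho>" by simp
          then have "{a,b} \<in> T" using tree_down[OF tr True] by simp
          then show False using ab(4) by simp
        qed
        then show ?thesis using r unfolding t1_def t2_def by blast
      next
        case False then show ?thesis using r by blast
      qed
    qed
    show "Pow t1 \<union> Pow t2 \<subseteq> Pow \<sigma> \<inter> (T \<union> Pow t1 \<union> Pow t2)"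
      unfolding t1_def t2_def by blast
  qed
  have union: "Pow \<sigma> \<union> (T \<union> Pow t1 \<union> Pow t2) = T \<union> Pow \<sigma>"
    unfolding t1_def t2_def by blast
  have SI: "measure_pmf.prob X {K. T \<union> Pow \<sigma> \<subseteq> K} * measure_pmf.prob X {K. Pow t1 \<union> Pow t2 \<subseteq> K}
      = measure_pmf.prob X {K. Pow \<sigma> \<subseteq> K} * measure_pmf.prob X {K. T \<union> Pow t1 \<union> Pow t2 \<subseteq> K}"
  proof -
    have "\<forall>Y1 Y2. subcomplex n Y1 \<longrightarrow> subcomplex n Y2 \<longrightarrow>
        measure_pmf.prob X {K. Y1 \<union> Y2 \<subseteq> K} * measure_pmf.prob X {K. Y1 \<inter> Y2 \<subseteq> K}
        = measure_pmf.prob X {K. Y1 \<subseteq> K} * measure_pmf.prob X {K. Y2 \<subseteq> K}"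
      using si unfolding spatially_independent_def .
    from this[rule_format, OF sc1 sc2] show ?thesis unfolding union inter .
  qed
  define PA where "PA = measure_pmf.prob X {K. T \<subseteq> K \<and> \<sigma> \<in> K}"
  define Q where "Q = measure_pmf.prob X {K. t1 \<in> K \<and> t2 \<in> K}"
  define S where "S = measure_pmf.prob X ({K. t1 \<union> t2 \<in> K} \<inter> {K. t1 \<in> K \<and> t2 \<in> K})"
  define Y where "Y = measure_pmf.prob X {K. T \<union> Pow t1 \<union> Pow t2 \<subseteq> K}"
  define PT where "PT = measure_pmf.prob X {K. T \<subseteq> K}"
  have ePA: "measure_pmf.prob X {K. T \<union> Pow \<sigma> \<subseteq> K} = PA"
    unfolding PA_def by (rule prob_cong_supp) (use powsub in auto)
  have eQ: "measure_pmf.prob X {K. Pow t1 \<union> Pow t2 \<subseteq> K} = Q"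
    unfolding Q_def by (rule prob_cong_supp) (use powsub in auto)
  have eS: "measure_pmf.prob X {K. Pow \<sigma> \<subseteq> K} = S"
    unfolding S_def un
  proof (rule prob_cong_supp)
    fix K assume K: "K \<in> set_pmf X"
    have "t1 \<subseteq> \<sigma>" "t2 \<subseteq> \<sigma>" using un by auto
    then show "K \<in> {K. Pow \<sigma> \<subseteq> K} \<longleftrightarrow> K \<in> {K. \<sigma> \<in> K} \<inter> {K. t1 \<in> K \<and> t2 \<in> K}"
      using powsub[OF K] dc[OF K] by auto
  qed
  have eq: "PA * Q = S * Y" using SI unfolding ePA eQ eS Y_def .
  have YT: "Y \<le> PT" unfolding Y_def PT_def
    by (rule measure_pmf.finite_measure_mono) auto
  have sv: "s n k X = s_pair X t1 t2" by (rule s_eq[OF hom rs adj])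
  have Q0: "Q \<ge> 0" unfolding Q_def by simp
  have S0: "S \<ge> 0" unfolding S_def by simp
  show ?thesis
  proof (cases "Q > 0")
    case True
    have spv: "s_pair X t1 t2 = S / Q"
      using True unfolding s_pair_def cond_prob_def Q_def S_def by simp
    have "PA = S / Q * Y" using eq True by (simp add: field_simps)
    also have "\<dots> \<le> S / Q * PT" using YT S0 Q0 by (intro mult_left_mono) simp_all
    finally show ?thesis unfolding sv spv PA_def PT_def .
  next
    case False
    then have Qz: "Q = 0" using Q0 by simp
    have spv: "s_pair X t1 t2 = 0"
      using False unfolding s_pair_def Q_def by simp
    have "PA = measure_pmf.prob X {K. T \<subseteq> K \<and> \<sigma> \<in> K \<and> t1 \<in> K \<and> t2 \<in> K}"
      unfolding PA_def
    proof (rule prob_cong_supp)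
      fix K assume K: "K \<in> set_pmf X"
      have "t1 \<subseteq> \<sigma>" "t2 \<subseteq> \<sigma>" using un by auto
      then show "K \<in> {K. T \<subseteq> K \<and> \<sigma> \<in> K} \<longleftrightarrow> K \<in> {K. T \<subseteq> K \<and> \<sigma> \<in> K \<and> t1 \<in> K \<and> t2 \<in> K}"
        using dc[OF K] by auto
    qed
    also have "\<dots> \<le> Q" unfolding Q_def
      by (rule measure_pmf.finite_measure_mono) auto
    finally have "PA \<le> 0" using Qz by simp
    then show ?thesis unfolding sv spv PA_def by simp
  qed
qed

theorem lemma4p2:
  fixes n k i :: nat and X :: "nat set set pmf" and T :: "nat set set"
    and \<sigma> :: "nat \<Rightarrow> nat set"
  assumes "random_subcomplex n X"
    and "homogeneous n X"
    and "spatially_independent n X"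
    and "tree k T" and "T \<subseteq> Pow {1..n}"
    and "measure_pmf.prob X {K. T \<subseteq> K} > 0"
    and "\<And>j. j \<in> {1..i} \<Longrightarrow> \<sigma> j \<subseteq> {1..n} \<and> ksimplex (k + 1) (\<sigma> j) \<and> \<sigma> j \<notin> T"
  shows "cond_prob X {K. \<forall>j\<in>{1..i}. \<sigma> j \<notin> K} {K. T \<subseteq> K} \<ge> 1 - real i * s n k X"
proof -
  define E where "E = {K. T \<subseteq> K}"
  define D where "D = (\<Union>j\<in>{1..i}. {K. T \<subseteq> K \<and> \<sigma> j \<in> K})"
  have AE: "{K. \<forall>j\<in>{1..i}. \<sigma> j \<notin> K} \<inter> E = E - D" unfolding E_def D_def by blast
  have DE: "D \<subseteq> E" unfolding E_def D_def by blast
  have PD: "measure_pmf.prob X (E - D) = measure_pmf.prob X E - measure_pmf.prob X D"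
    using DE by (intro measure_pmf.finite_measure_Diff) auto
  have "measure_pmf.prob X D \<le> (\<Sum>j\<in>{1..i}. measure_pmf.prob X {K. T \<subseteq> K \<and> \<sigma> j \<in> K})"
    unfolding D_def by (rule measure_pmf.finite_measure_subadditive_finite) auto
  also have "\<dots> \<le> (\<Sum>j\<in>{1..i}. s n k X * measure_pmf.prob X E)"
  proof (rule sum_mono)
    fix j assume j: "j \<in> {1..i}"
    show "measure_pmf.prob X {K. T \<subseteq> K \<and> \<sigma> j \<in> K} \<le> s n k X * measure_pmf.prob X E"
      unfolding E_def using assms(7)[OF j]
      by (intro sigma_bound[OF assms(1,2,3,4,5)]) auto
  qed
  also have "\<dots> = real i * s n k X * measure_pmf.prob X E" by simp
  finally have Db: "measure_pmf.prob X D \<le> real i * s n k X * measure_pmf.prob X E" .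
  have pos: "measure_pmf.prob X E > 0" using assms(6) unfolding E_def .
  have "1 - real i * s n k X = (measure_pmf.prob X E - real i * s n k X * measure_pmf.prob X E) / measure_pmf.prob X E"
    using pos by (simp add: field_simps)
  also have "\<dots> \<le> (measure_pmf.prob X E - measure_pmf.prob X D) / measure_pmf.prob X E"
    using pos Db by (intro divide_right_mono) simp_all
  also have "\<dots> = cond_prob X {K. \<forall>j\<in>{1..i}. \<sigma> j \<notin> K} {K. T \<subseteq> K}"
    unfolding cond_prob_def E_def[symmetric] AE PD ..
  finally show ?thesis .
qed

end
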